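(* Let $G$ be a finite group that is not of prime power order, and suppose there exists an element $x\in G$ of prime order $p$ such that the centralizer $C_G(x)$ is a $p$-group. Then the cyclic graph $\Delta(G)$ is disconnected.
   Context: For a finite group $G$, the cyclic graph $\Delta(G)$ has vertex set $G^{\#}=G\setminus\{1\}$, and distinct vertices $x,y$ are adjacent if and only if the subgroup $\langle x,y\rangle$ is cyclic. *)

theory Defs
  imports "HOL-Algebra.Algebra"
begin

definition centralizer_el :: "('a, 'b) monoid_scheme \<Rightarrow> 'a \<Rightarrow> 'a set" where
  "centralizer_el G x = {g \<in> carrier G. g \<otimes>\<^bsub>G\<^esub> x = x \<otimes>\<^bsub>G\<^esub> g}"

definition cyc_vertices :: "('a, 'b) monoid_scheme \<Rightarrow> 'a set" where
  "cyc_vertices G = carrier G - {\<one>\<^bsub>G\<^esub>}"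

definition cyc_adj :: "('a, 'b) monoid_scheme \<Rightarrow> 'a \<Rightarrow> 'a \<Rightarrow> bool" where
  "cyc_adj G x y \<longleftrightarrow> x \<in> cyc_vertices G \<and> y \<in> cyc_vertices G \<and> x \<noteq> y \<and>
     cyclic_group (subgroup_generated G {x, y})"

definition cyc_graph_connected :: "('a, 'b) monoid_scheme \<Rightarrow> bool" where
  "cyc_graph_connected G \<longleftrightarrow>
     (\<forall>x \<in> cyc_vertices G. \<forall>y \<in> cyc_vertices G. (cyc_adj G)\<^sup>*\<^sup>* x y)"

definition prime_power_order :: "('a, 'b) monoid_scheme \<Rightarrow> bool" where
  "prime_power_order G \<longleftrightarrow> (\<exists>q k. Factorial_Ring.prime (q::nat) \<and> order G = q ^ k)"

end

theory Submission imports Defs "HOL-Computational_Algebra.Primes" begin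

lemma all_factors_p_pow:
  fixes n p :: nat
  assumes "n > 0" "\<forall>q. Factorial_Ring.prime q \<and> q dvd n \<longrightarrow> q = p"
  shows "\<exists>k. n = p ^ k"
  using assms
proof (induction n rule: less_induct)
  case (less n)
  show ?case
  proof (cases "n = 1")
    case True then show ?thesis by (metis power_0)
  next
    case False
    then obtain q where q: "Factorial_Ring.prime q" "q dvd n" using prime_factor_nat by blast
    then have qp: "q = p" using less.prems by blast
    then obtain n' where n': "n = p * n'" using q by blast
    have p1: "p > 1" using q qp prime_gt_1_nat by blast
    have "n' > 0" using n' less.prems by (metis gr0I mult_0_right less_irrefl)
    then have "n' < n" using n' p1 by (metis mult_less_mono1 mult_1 mult.commute)
    moreover have "\<forall>q. Factorial_Ring.prime q \<and> q dvd n' \<longrightarrow> q = p" using less.prems n' dvd_mult by blast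
    ultimately obtain k where "n' = p ^ k" using less.IH \<open>n' > 0\<close> by blast
    then show ?thesis using n' by (metis power_Suc)
  qed
qed


context group begin

lemma int_pow_nat_rep:
  assumes fin: "finite (carrier G)" and g: "g \<in> carrier G"
  shows "\<exists>a::nat. g [^] (i::int) = g [^] a"
proof -
  define N where "N = ord g"
  have N: "N \<ge> 1" using ord_ge_1[OF fin g] N_def by simp
  define a where "a = nat (i mod int N)"
  have ia: "int a = i mod int N" using N a_def by simp
  have "g [^] i = g [^] (int a)"
    unfolding int_pow_eq[OF g] ia N_def[symmetric]
    by (metis dvd_minus_mod minus_diff_eq dvd_minus_iff)
  then show ?thesis using int_pow_int by metis
qed

lemma key_pow:
  assumes fin: "finite (carrier G)" and g: "g \<in> carrier G"
    and p: "Factorial_Ring.prime p" and oa: "ord (g [^] (a::nat)) = p"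
    and ob: "ord (g [^] (b::nat)) = p ^ e" and e: "e \<ge> 1"
  shows "\<exists>t::nat. (g [^] b) [^] t = g [^] a"
proof -
  define N where "N = ord g"
  have N: "N \<ge> 1" using ord_ge_1[OF fin g] N_def by simp
  have p1: "p > 1" using p prime_gt_1_nat by blast
  have b0: "b \<noteq> 0"
  proof
    assume "b = 0" hence "ord (g [^] b) = 1" by simp
    moreover have "p ^ e > 1" using one_less_power[OF p1, of e] e by simp
    ultimately show False using ob by linarith
  qed
  have a0: "a \<noteq> 0"
  proof
    assume "a = 0" hence "ord (g [^] a) = 1" by simp
    with oa p1 show False by simp
  qed
  have hb: "N div gcd N b = p ^ e" using ob ord_pow_gen[OF g, of b] b0 N_def by simp
  have ha: "N div gcd N a = p" using oa ord_pow_gen[OF g, of a] a0 N_def by simp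
  have Nb: "N = p ^ e * gcd N b" using hb by (metis dvd_mult_div_cancel gcd_dvd1 mult.commute)
  have Na: "N = p * gcd N a" using ha by (metis dvd_mult_div_cancel gcd_dvd1 mult.commute)
  have "p * gcd N a = p * (p ^ (e - 1) * gcd N b)"
    using Na Nb e by (metis mult.assoc power_eq_if not_one_le_zero)
  then have "gcd N a = p ^ (e - 1) * gcd N b" using p1 by simp
  then have "gcd N b dvd gcd N a" by simp
  then have "gcd N b dvd a" using gcd_dvd2 dvd_trans by blast
  then obtain c where c: "a = gcd N b * c" by blast
  obtain u v where uv: "b * u = N * v + gcd b N" using bezout_nat[OF b0, of N] by blast
  have "(g [^] b) [^] (u * c) = g [^] (b * u * c)" using g by (simp add: nat_pow_pow mult.assoc)
  also have "b * u * c = N * (v * c) + a" using uv c by (simp add: gcd.commute algebra_simps)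
  also have "g [^] (N * (v * c) + a) = g [^] a"
    using g N_def by (simp add: nat_pow_mult[symmetric] nat_pow_pow[symmetric])
  finally show ?thesis by blast
qed

lemma centralizer_subgroup:
  assumes x: "x \<in> carrier G"
  shows "subgroup (centralizer_el G x) G"
proof (rule subgroupI)
  show "centralizer_el G x \<subseteq> carrier G" unfolding centralizer_el_def by auto
  show "centralizer_el G x \<noteq> {}" using x unfolding centralizer_el_def by auto
  fix a assume a: "a \<in> centralizer_el G x"
  then have ac: "a \<in> carrier G" and ax: "a \<otimes> x = x \<otimes> a" unfolding centralizer_el_def by auto
  have "inv a \<otimes> x = inv a \<otimes> x \<otimes> a \<otimes> inv a" using ac x by (simp add: m_assoc)
  also have "\<dots> = inv a \<otimes> (a \<otimes> x) \<otimes> inv a" using ac x ax by (simp add: m_assoc)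
  also have "\<dots> = x \<otimes> inv a" using ac x by (simp add: m_assoc[symmetric])
  finally show "inv a \<in> centralizer_el G x" using ac unfolding centralizer_el_def by auto
  fix b assume b: "b \<in> centralizer_el G x"
  then have bc: "b \<in> carrier G" and bx: "b \<otimes> x = x \<otimes> b" unfolding centralizer_el_def by auto
  have "a \<otimes> b \<otimes> x = x \<otimes> (a \<otimes> b)" using ac bc x ax bx
    by (metis m_assoc)
  then show "a \<otimes> b \<in> centralizer_el G x" using ac bc unfolding centralizer_el_def by auto
qed

lemma ord_dvd_subgroup_card:
  assumes fin: "finite (carrier G)" and H: "subgroup H G" and u: "u \<in> H"
  shows "ord u dvd card H"
proof -
  have uc: "u \<in> carrier G" using H u subgroup.subset by blast
  have S: "subgroup (generate G {u}) G" using uc generate_is_subgroup by simp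
  have sub: "generate G {u} \<subseteq> H" using H u generate_subgroup_incl by simp
  have S2: "subgroup (generate G {u}) (G\<lparr>carrier := H\<rparr>)" using subgroup_incl[OF S H sub] .
  have gH: "group (G\<lparr>carrier := H\<rparr>)" using subgroup_imp_group[OF H] .
  have "card (rcosets\<^bsub>G\<lparr>carrier := H\<rparr>\<^esub> (generate G {u})) * card (generate G {u}) = order (G\<lparr>carrier := H\<rparr>)"
    using group.lagrange[OF gH S2] .
  then have "card (rcosets\<^bsub>G\<lparr>carrier := H\<rparr>\<^esub> (generate G {u})) * card (generate G {u}) = card H"
    by (simp add: order_def)
  then have "card (generate G {u}) dvd card H" using dvd_triv_right by metis
  then show ?thesis using generate_pow_card[OF uc] by simp
qed

end

lemma (in group) invariant:
  assumes fin: "finite (carrier G)" and x: "x \<in> carrier G"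
    and p: "Factorial_Ring.prime p" and ox: "ord x = p"
    and C: "card (centralizer_el G x) = p ^ k"
    and path: "(cyc_adj G)\<^sup>*\<^sup>* x y"
  shows "y \<in> carrier G \<and> y \<noteq> \<one> \<and> (\<exists>n::nat. y [^] n = x)"
  using path
proof (induction rule: rtranclp_induct)
  case base
  have "x \<noteq> \<one>" using ox ord_eq_1[OF x] p by (metis not_prime_1)
  then show ?case using x by (metis nat_pow_eone)
next
  case (step y z)
  from step.IH obtain n :: nat where y: "y \<in> carrier G" and y1: "y \<noteq> \<one>" and yn: "y [^] n = x" by blast
  from step.hyps(2) have z: "z \<in> carrier G" and z1: "z \<noteq> \<one>"
    and cyc: "cyclic_group (subgroup_generated G {y, z})"
    unfolding cyc_adj_def cyc_vertices_def by auto
  let ?H = "subgroup_generated G {y, z}"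
  have gH: "group ?H" by simp
  obtain g where gin: "g \<in> carrier ?H" and carH: "carrier ?H = range (\<lambda>n::int. g [^]\<^bsub>?H\<^esub> n)"
    using group.cyclic_group[OF gH] cyc by blast
  have gG: "g \<in> carrier G" using gin carrier_subgroup_generated_subset by blast
  have yzH: "{y, z} \<subseteq> carrier ?H" using subgroup_generated_subset_carrier_subset[of "{y,z}"] y z by simp
  obtain i where yi: "y = g [^]\<^bsub>?H\<^esub> (i::int)" using yzH carH by blast
  obtain j where zj: "z = g [^]\<^bsub>?H\<^esub> (j::int)" using yzH carH by blast
  have yi': "y = g [^] i" using yi int_pow_subgroup_generated[OF gin] by simp
  have zj': "z = g [^] j" using zj int_pow_subgroup_generated[OF gin] by simp
  obtain a :: nat where ya: "y = g [^] a" using int_pow_nat_rep[OF fin gG, of i] yi' by metis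
  obtain b :: nat where zb: "z = g [^] b" using int_pow_nat_rep[OF fin gG, of j] zj' by metis
  have xa: "x = g [^] (a * n)" using yn ya gG by (simp add: nat_pow_pow)
  have comm: "z \<otimes> x = x \<otimes> z" using xa zb gG
    by (simp add: nat_pow_mult add.commute)
  then have zC: "z \<in> centralizer_el G x" using z unfolding centralizer_el_def by simp
  have "ord z dvd p ^ k"
    using ord_dvd_subgroup_card[OF fin centralizer_subgroup[OF x] zC] C by simp
  then obtain e where e: "ord z = p ^ e" using divides_primepow_nat[OF p] by blast
  have e1: "e \<ge> 1"
  proof (rule ccontr)
    assume "\<not> e \<ge> 1" then have "ord z = 1" using e by simp
    then show False using ord_eq_1[OF z] z1 by simp
  qed
  obtain t :: nat where "(g [^] b) [^] t = g [^] (a * n)"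
    using key_pow[OF fin gG p _ _ e1, of "a * n" b] xa zb ox e by metis
  then have "z [^] t = x" using xa zb by simp
  then show ?case using z z1 by blast
qed

theorem lemma3p3:
  fixes G (structure) and x :: 'a and p :: nat
  assumes "group G" and "finite (carrier G)"
    and "\<not> prime_power_order G"
    and "x \<in> carrier G" and "Factorial_Ring.prime p" and "group.ord G x = p"
    and "\<exists>k. card (centralizer_el G x) = p ^ k"
  shows "\<not> cyc_graph_connected G"
proof
  assume conn: "cyc_graph_connected G"
  interpret group G by fact
  have fin: "finite (carrier G)" and x: "x \<in> carrier G" and p: "Factorial_Ring.prime p"
    and ox: "ord x = p" using assms by auto
  obtain k where C: "card (centralizer_el G x) = p ^ k" using assms(7) by blast
  have opos: "order G > 0" using fin order_gt_0_iff_finite by blast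
  obtain q where q: "Factorial_Ring.prime q" "q dvd order G" "q \<noteq> p"
  proof -
    have "\<not> (\<forall>q. Factorial_Ring.prime q \<and> q dvd order G \<longrightarrow> q = p)"
    proof
      assume "\<forall>q. Factorial_Ring.prime q \<and> q dvd order G \<longrightarrow> q = p"
      then obtain k' where "order G = p ^ k'" using all_factors_p_pow opos by blast
      then show False using assms(3) p unfolding prime_power_order_def by blast
    qed
    then show ?thesis using that by blast
  qed
  define a where "a = multiplicity q (order G)"
  have qa: "q ^ a dvd order G" unfolding a_def by (rule multiplicity_dvd)
  then obtain m where om: "order G = q ^ a * m" by blast
  obtain H where H: "subgroup H G" "card H = q ^ a"
    using sylow_thm[OF q(1) assms(1) om fin] by blast
  have a1: "a \<ge> 1" unfolding a_def using q opos
    by (metis One_nat_def Suc_leI not_gr0 not_prime_unit multiplicity_eq_zero_iff)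
  have q1: "q > 1" using q(1) prime_gt_1_nat by blast
  have "card H > 1" using H(2) a1 q1 one_less_power by (metis less_le_trans order_refl zero_less_one le_refl Suc_le_eq One_nat_def)
  then obtain u where u: "u \<in> H" "u \<noteq> \<one>"
  proof -
    have "\<not> H \<subseteq> {\<one>}"
    proof
      assume "H \<subseteq> {\<one>}"
      then have "card H \<le> 1" by (metis card.empty card.insert_remove card_mono finite.emptyI finite.insertI
            Diff_empty empty_iff zero_le_one order_refl le_zero_eq One_nat_def card_insert_disjoint)
      then show False using \<open>card H > 1\<close> by simp
    qed
    then show ?thesis using that by blast
  qed
  have uc: "u \<in> carrier G" using u H(1) subgroup.subset by blast
  have "ord u dvd q ^ a" using ord_dvd_subgroup_card[OF fin H(1) u(1)] H(2) by simp
  then obtain j where j: "ord u = q ^ j" using divides_primepow_nat[OF q(1)] by blast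
  have j1: "j \<ge> 1"
  proof (rule ccontr)
    assume "\<not> j \<ge> 1" then have "ord u = 1" using j by simp
    then show False using ord_eq_1[OF uc] u(2) by simp
  qed
  have x1: "x \<noteq> \<one>" using ox ord_eq_1[OF x] p by (metis not_prime_1)
  have "(cyc_adj G)\<^sup>*\<^sup>* x u"
    using conn x x1 uc u(2) unfolding cyc_graph_connected_def cyc_vertices_def by blast
  then obtain n :: nat where un: "u [^] n = x" using invariant[OF fin x p ox C] by blast
  have "u \<otimes> x = x \<otimes> u" using un uc nat_pow_comm[of u n 1] by (metis nat_pow_eone)
  then have "u \<in> centralizer_el G x" using uc unfolding centralizer_el_def by simp
  then have "ord u dvd p ^ k"
    using ord_dvd_subgroup_card[OF fin centralizer_subgroup[OF x]] C by metis
  then have "q dvd p ^ k" using j j1 by (metis dvd_trans dvd_power le_numeral_extra(2) not_one_le_zero neq0_conv)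
  then have "q dvd p" using q(1) prime_dvd_power by blast
  then show False using q p primes_dvd_imp_eq by blast
qed

end
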